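(* For every $n\ge 1$ and every Boolean function $f:\{-1,1\}^n\to\{-1,1\}$, we have $s(f)\ge \sqrt{\deg(f)}$.
   Context: For $x\in\{-1,1\}^n$, the sensitivity $s(f,x)$ is the number of indices $i\in[n]$ such that $f(x)\ne f(x^{(i)})$, where $x^{(i)}$ is $x$ with its $i$-th coordinate negated; $s(f)=\max_x s(f,x)$. $\deg(f)$ is the degree of the unique multilinear real polynomial agreeing with $f$ on $\{-1,1\}^n$. *)

theory Defs
  imports Complex_Main
begin

text \<open>The hypercube {-1,1}^n, encoded as functions nat => real that take values
  in {-1,1} on coordinates 0..n-1 and are fixed to 1 outside (canonical padding).\<close>
definition cube :: "nat \<Rightarrow> (nat \<Rightarrow> real) set" where
  "cube n = {x. (\<forall>i<n. x i = 1 \<or> x i = -1) \<and> (\<forall>i\<ge>n. x i = 1)}"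

definition flip :: "(nat \<Rightarrow> real) \<Rightarrow> nat \<Rightarrow> (nat \<Rightarrow> real)" where
  "flip x i = x(i := - x i)"

definition boolean_fun :: "nat \<Rightarrow> ((nat \<Rightarrow> real) \<Rightarrow> real) \<Rightarrow> bool" where
  "boolean_fun n f \<longleftrightarrow> (\<forall>x\<in>cube n. f x = 1 \<or> f x = -1)"

definition sens_at :: "nat \<Rightarrow> ((nat \<Rightarrow> real) \<Rightarrow> real) \<Rightarrow> (nat \<Rightarrow> real) \<Rightarrow> nat" where
  "sens_at n f x = card {i. i < n \<and> f x \<noteq> f (flip x i)}"

definition sensitivity :: "nat \<Rightarrow> ((nat \<Rightarrow> real) \<Rightarrow> real) \<Rightarrow> nat" where
  "sensitivity n f = Max (sens_at n f ` cube n)"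

definition mdeg :: "nat \<Rightarrow> ((nat \<Rightarrow> real) \<Rightarrow> real) \<Rightarrow> nat" where
  "mdeg n f = (LEAST d. \<exists>c :: nat set \<Rightarrow> real.
      (\<forall>S. d < card S \<longrightarrow> c S = 0) \<and>
      (\<forall>x\<in>cube n. f x = (\<Sum>S\<in>Pow {..<n}. c S * (\<Prod>i\<in>S. x i))))"

end

theory Submission
  imports Defs
begin


lemma underdet:
  fixes a :: "'c \<Rightarrow> 'a \<Rightarrow> real"
  assumes "finite C" "finite X" "card C < card X"
  shows "\<exists>w. (\<forall>x. x \<notin> X \<longrightarrow> w x = 0) \<and> (\<exists>x\<in>X. w x \<noteq> 0) \<and> (\<forall>c\<in>C. (\<Sum>x\<in>X. a c x * w x) = 0)"
  using assms
proof (induction C arbitrary: X a rule: finite_induct)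
  case empty
  then obtain x where x: "x \<in> X" by (metis card.empty card.infinite less_irrefl ex_in_conv)
  show ?case
    by (rule exI[of _ "\<lambda>y. if y = x then 1 else 0"]) (use x in auto)
next
  case (insert c C)
  show ?case
  proof (cases "\<forall>x\<in>X. a c x = 0")
    case True
    have "card C < card X" using insert by simp
    from insert.IH[OF insert.prems(1) this, of a] obtain w where
      w: "\<forall>x. x \<notin> X \<longrightarrow> w x = 0" "\<exists>x\<in>X. w x \<noteq> 0" "\<forall>c\<in>C. (\<Sum>x\<in>X. a c x * w x) = 0"
      by blast
    show ?thesis using w True by (intro exI[of _ w]) auto
  next
    case False
    then obtain s where s: "s \<in> X" "a c s \<noteq> 0" by auto
    define X' where "X' = X - {s}"
    define a' where "a' = (\<lambda>c' x. a c' x - a c' s * a c x / a c s)"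
    have fX': "finite X'" using insert X'_def by simp
    have "card X' = card X - 1" using s insert by (simp add: X'_def)
    then have "card C < card X'" using insert by simp
    from insert.IH[OF fX' this, of a'] obtain w' where
      w': "\<forall>x. x \<notin> X' \<longrightarrow> w' x = 0" "\<exists>x\<in>X'. w' x \<noteq> 0" "\<forall>c\<in>C. (\<Sum>x\<in>X'. a' c x * w' x) = 0"
      by blast
    define w where "w = w'(s := - (\<Sum>x\<in>X'. a c x * w' x) / a c s)"
    have sumX: "(\<Sum>x\<in>X. b x * w x) = b s * w s + (\<Sum>x\<in>X'. b x * w' x)" for b
    proof -
      have "(\<Sum>x\<in>X. b x * w x) = b s * w s + (\<Sum>x\<in>X'. b x * w x)"
        unfolding X'_def using s insert.prems(1) by (simp add: sum.remove)
      also have "(\<Sum>x\<in>X'. b x * w x) = (\<Sum>x\<in>X'. b x * w' x)"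
        by (rule sum.cong) (auto simp: w_def X'_def)
      finally show ?thesis .
    qed
    show ?thesis
    proof (intro exI[of _ w] conjI)
      show "\<forall>x. x \<notin> X \<longrightarrow> w x = 0" using w'(1) s by (auto simp: w_def X'_def)
      show "\<exists>x\<in>X. w x \<noteq> 0" using w'(2) by (auto simp: w_def X'_def)
      show "\<forall>c\<in>insert c C. (\<Sum>x\<in>X. a c x * w x) = 0"
      proof
        fix c' assume "c' \<in> insert c C"
        then consider "c' = c" | "c' \<in> C" by blast
        then show "(\<Sum>x\<in>X. a c' x * w x) = 0"
        proof cases
          case 1 then show ?thesis unfolding sumX using s by (simp add: w_def)
        next
          case 2
          have "(\<Sum>x\<in>X'. a' c' x * w' x) = (\<Sum>x\<in>X'. a c' x * w' x) - a c' s / a c s * (\<Sum>x\<in>X'. a c x * w' x)"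
            unfolding a'_def sum_distrib_left sum_subtractf[symmetric]
            by (rule sum.cong) (auto simp: field_simps)
          then have "(\<Sum>x\<in>X'. a c' x * w' x) = a c' s / a c s * (\<Sum>x\<in>X'. a c x * w' x)"
            using w'(3) 2 by simp
          then show ?thesis unfolding sumX by (simp add: w_def)
        qed
      qed
    qed
  qed
qed



definition tog :: "nat set \<Rightarrow> nat \<Rightarrow> nat set" where
  "tog S i = (if i \<in> S then S - {i} else insert i S)"
definition sg :: "nat set \<Rightarrow> nat \<Rightarrow> real" where
  "sg S i = (-1) ^ card {j\<in>S. i < j}"
definition Aop :: "nat set \<Rightarrow> (nat set \<Rightarrow> real) \<Rightarrow> nat set \<Rightarrow> real" where
  "Aop I w S = (\<Sum>i\<in>I. sg S i * w (tog S i))"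

lemma tog_tog[simp]: "tog (tog S i) i = S" by (auto simp: tog_def)
lemma tog_comm: "tog (tog S i) j = tog (tog S j) i" by (auto simp: tog_def)
lemma sg_sq: "sg S i * sg S i = 1"
  by (simp add: sg_def flip: power_add)
lemma abs_sg[simp]: "\<bar>sg S i\<bar> = 1" by (simp add: sg_def)
lemma sg_tog_same: "sg (tog S i) i = sg S i"
proof -
  have "{j\<in>tog S i. i < j} = {j\<in>S. i < j}" by (auto simp: tog_def)
  then show ?thesis by (simp add: sg_def)
qed
lemma sg_tog_lt1: "i < j \<Longrightarrow> sg (tog S i) j = sg S j"
proof -
  assume "i < j"
  then have "{k\<in>tog S i. j < k} = {k\<in>S. j < k}" by (auto simp: tog_def)
  then show ?thesis by (simp add: sg_def)
qed
lemma pow_tog: "finite A \<Longrightarrow> (-1::real) ^ card (tog A j) = - ((-1) ^ card A)"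
proof (cases "j \<in> A")
  case True
  assume f: "finite A"
  have "card A = Suc (card (A - {j}))" using card_Suc_Diff1[OF f True] by simp
  then have "(-1::real) ^ card A = - ((-1) ^ card (A - {j}))" by (metis power_Suc mult_minus1)
  then show ?thesis using True by (simp add: tog_def)
next
  case False
  assume "finite A"
  then show ?thesis using False by (simp add: tog_def)
qed
lemma sg_tog_lt2: "finite S \<Longrightarrow> i < j \<Longrightarrow> sg (tog S j) i = - sg S i"
proof -
  assume f: "finite S" and ij: "i < j"
  have "{k\<in>tog S j. i < k} = tog {k\<in>S. i < k} j" using ij by (auto simp: tog_def)
  then show ?thesis using f by (simp add: sg_def pow_tog)
qed

lemma AA:
  assumes "finite I" "finite S"
  shows "Aop I (Aop I w) S = real (card I) * w S"
proof -
  define F where "F i j = sg S i * sg (tog S i) j * w (tog (tog S i) j)" for i j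
  have anti: "F j i = - F i j" if "i \<noteq> j" for i j
  proof (cases "i < j")
    case True
    then show ?thesis using assms(2)
      by (simp add: F_def sg_tog_lt1 sg_tog_lt2 tog_comm[of S i j])
  next
    case False
    then have "j < i" using that by simp
    then show ?thesis using assms(2)
      by (simp add: F_def sg_tog_lt1 sg_tog_lt2 tog_comm[of S i j])
  qed
  have diag: "F i i = w S" for i
    by (simp add: F_def sg_tog_same sg_sq)
  have "Aop I (Aop I w) S = (\<Sum>i\<in>I. \<Sum>j\<in>I. F i j)"
    by (simp add: Aop_def F_def sum_distrib_left mult.assoc)
  define K where "K i j = (if i = j then 0 else F i j)" for i j
  have "(\<Sum>i\<in>I. \<Sum>j\<in>I. F i j) = (\<Sum>i\<in>I. \<Sum>j\<in>I. (if i = j then F i i else 0) + K i j)"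
    by (rule sum.cong, simp, rule sum.cong) (auto simp: K_def)
  also have "\<dots> = (\<Sum>i\<in>I. F i i) + (\<Sum>i\<in>I. \<Sum>j\<in>I. K i j)"
    using assms(1) by (simp add: sum.distrib)
  also have "(\<Sum>i\<in>I. \<Sum>j\<in>I. K i j) = 0"
  proof -
    have Kanti: "K j i = - K i j" for i j by (cases "i = j") (simp_all add: K_def anti[of i j])
    have "(\<Sum>i\<in>I. \<Sum>j\<in>I. K i j) = (\<Sum>j\<in>I. \<Sum>i\<in>I. K i j)" by (rule sum.swap)
    also have "\<dots> = (\<Sum>j\<in>I. \<Sum>i\<in>I. - K j i)" by (intro sum.cong refl) (metis Kanti minus_minus)
    also have "\<dots> = - (\<Sum>j\<in>I. \<Sum>i\<in>I. K j i)" by (simp add: sum_negf)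
    finally show ?thesis by simp
  qed
  finally show ?thesis using \<open>Aop I (Aop I w) S = _\<close> by (simp add: diag)
qed



lemma huang:
  assumes fI: "finite I" and d1: "card I \<ge> 1" and HI: "H \<subseteq> Pow I" and big: "2 * card H > 2 ^ card I"
  shows "\<exists>S\<in>H. sqrt (real (card I)) \<le> real (card {i\<in>I. tog S i \<in> H})"
proof -
  define d where "d = card I"
  define r where "r = sqrt (real d)"
  obtain m where m: "m \<in> I" using d1 by (metis card.empty ex_in_conv not_one_le_zero)
  define X where "X = Pow (I - {m})"
  define C where "C = Pow I - H"
  have fX: "finite X" "finite C" using fI by (auto simp: X_def C_def)
  have cX: "card X = 2 ^ (d - 1)" using fI m by (simp add: X_def card_Pow d_def)
  have fH: "finite H" using HI fI by (meson finite_Pow_iff finite_subset)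
  have cC: "card C = 2 ^ d - card H" using HI fH fI by (simp add: C_def card_Diff_subset card_Pow d_def)
  have d2: "(2::nat) ^ d = 2 * 2 ^ (d - 1)" using d1 unfolding d_def by (metis Suc_diff_le diff_Suc_1 power_Suc)
  have bigd: "2 ^ d < 2 * card H" using big by (simp add: d_def)
  have hH: "card H \<le> 2 ^ d" using card_mono[OF _ HI] fI by (simp add: card_Pow d_def)
  have "card C < card X" unfolding cC cX using hH bigd d2 by linarith
  define a where "a R x = (if x = R then r else 0) + (\<Sum>i\<in>I. if x = tog R i then sg R i else 0)" for R x
  obtain w where w0: "\<forall>x. x \<notin> X \<longrightarrow> w x = 0" and wnz: "\<exists>x\<in>X. w x \<noteq> 0"
    and weq: "\<forall>R\<in>C. (\<Sum>x\<in>X. a R x * w x) = 0"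
    using underdet[OF fX(2) fX(1) \<open>card C < card X\<close>, of a] by blast
  define v where "v R = Aop I w R + r * w R" for R
  have vlin: "(\<Sum>x\<in>X. a R x * w x) = v R" for R
  proof -
    have "(\<Sum>x\<in>X. a R x * w x) = (\<Sum>x\<in>X. (if x = R then r * w x else 0)) + (\<Sum>x\<in>X. \<Sum>i\<in>I. (if x = tog R i then sg R i * w x else 0))"
    proof -
      have "a R x * w x = (if x = R then r * w x else 0) + (\<Sum>i\<in>I. (if x = tog R i then sg R i * w x else 0))" for x
        unfolding a_def distrib_right sum_distrib_right by (intro arg_cong2[where f="(+)"] sum.cong refl) auto
      then show ?thesis by (simp add: sum.distrib)
    qed
    also have "(\<Sum>x\<in>X. (if x = R then r * w x else 0)) = r * w R"
      using fX w0 by (auto simp: sum.delta')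
    also have "(\<Sum>x\<in>X. \<Sum>i\<in>I. (if x = tog R i then sg R i * w x else 0)) = (\<Sum>i\<in>I. \<Sum>x\<in>X. (if x = tog R i then sg R i * w x else 0))"
      by (rule sum.swap)
    also have "\<dots> = (\<Sum>i\<in>I. sg R i * w (tog R i))"
      using fX w0 by (intro sum.cong refl) (auto simp: sum.delta')
    finally show ?thesis by (simp add: v_def Aop_def)
  qed
  have v0: "\<forall>R\<in>C. v R = 0" using weq vlin by simp
  have rr: "r * r = real d" by (simp add: r_def)
  have eig: "Aop I v R = r * v R" if "finite R" for R
  proof -
    have "Aop I v R = Aop I (Aop I w) R + r * Aop I w R"
      by (simp add: v_def Aop_def sum.distrib distrib_left sum_distrib_left algebra_simps)
    also have "\<dots> = real d * w R + r * Aop I w R" using AA[OF fI that] by (simp add: d_def)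
    also have "\<dots> = r * v R" using rr by (simp add: v_def algebra_simps)
    finally show ?thesis .
  qed
  obtain S1 where S1: "S1 \<in> X" "w S1 \<noteq> 0" using wnz by blast
  have "v (insert m S1) = sg (insert m S1) m * w S1"
  proof -
    have mS1: "m \<notin> S1" using S1 by (auto simp: X_def)
    have "w (insert m S1) = 0" using w0 by (auto simp: X_def)
    moreover have "Aop I w (insert m S1) = sg (insert m S1) m * w (tog (insert m S1) m) + (\<Sum>i\<in>I - {m}. sg (insert m S1) i * w (tog (insert m S1) i))"
      unfolding Aop_def using fI m by (simp add: sum.remove)
    moreover have "(\<Sum>i\<in>I - {m}. sg (insert m S1) i * w (tog (insert m S1) i)) = 0"
    proof (intro sum.neutral ballI)
      fix i assume "i \<in> I - {m}"
      then have "m \<in> tog (insert m S1) i" by (auto simp: tog_def)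
      then have "tog (insert m S1) i \<notin> X" by (auto simp: X_def)
      then show "sg (insert m S1) i * w (tog (insert m S1) i) = 0" using w0 by simp
    qed
    moreover have "tog (insert m S1) m = S1" using mS1 by (auto simp: tog_def)
    ultimately show ?thesis by (simp add: v_def)
  qed
  then have vS1: "v (insert m S1) \<noteq> 0" using S1 by (simp add: sg_def)
  have S1I: "insert m S1 \<in> Pow I" using S1 m by (auto simp: X_def)
  define M where "M = Max ((\<lambda>R. \<bar>v R\<bar>) ` Pow I)"
  have fP: "finite (Pow I)" using fI by simp
  have "M \<in> (\<lambda>R. \<bar>v R\<bar>) ` Pow I" unfolding M_def using fP by (intro Max_in) auto
  then obtain S where S: "S \<in> Pow I" "\<bar>v S\<bar> = M" by blast
  have Mge: "\<bar>v R\<bar> \<le> M" if "R \<in> Pow I" for R using fP that unfolding M_def by (intro Max_ge) auto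
  have Mpos: "M > 0" using Mge[OF S1I] vS1 by linarith
  have SH: "S \<in> H" using S Mpos v0 by (auto simp: C_def)
  have fS: "finite S" using S fI by (meson PowD finite_subset)
  have "r * M = \<bar>Aop I v S\<bar>" using eig[OF fS] S r_def by (simp add: abs_mult)
  also have "\<dots> \<le> (\<Sum>i\<in>I. \<bar>sg S i * v (tog S i)\<bar>)" unfolding Aop_def by (rule sum_abs)
  also have "\<dots> = (\<Sum>i\<in>I. if tog S i \<in> H then \<bar>v (tog S i)\<bar> else 0)"
  proof (intro sum.cong refl)
    fix i assume i: "i \<in> I"
    have "tog S i \<in> Pow I" using S i by (auto simp: tog_def)
    then show "\<bar>sg S i * v (tog S i)\<bar> = (if tog S i \<in> H then \<bar>v (tog S i)\<bar> else 0)"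
      using v0 by (auto simp: abs_mult C_def)
  qed
  also have "\<dots> \<le> (\<Sum>i\<in>I. if tog S i \<in> H then M else 0)"
  proof (intro sum_mono)
    fix i assume i: "i \<in> I"
    have "tog S i \<in> Pow I" using S i by (auto simp: tog_def)
    then show "(if tog S i \<in> H then \<bar>v (tog S i)\<bar> else 0) \<le> (if tog S i \<in> H then M else 0)"
      using Mge by auto
  qed
  also have "\<dots> = real (card {i\<in>I. tog S i \<in> H}) * M"
    using fI by (simp add: sum.inter_filter[symmetric])
  finally have "r * M \<le> real (card {i\<in>I. tog S i \<in> H}) * M" .
  then have "r \<le> real (card {i\<in>I. tog S i \<in> H})" using Mpos by (simp add: mult_le_cancel_right)
  then show ?thesis using SH unfolding r_def d_def by blast
qed



definition pt :: "nat set \<Rightarrow> nat \<Rightarrow> real" where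
  "pt S = (\<lambda>i. if i \<in> S then -1 else 1)"

lemma pt_cube: "S \<subseteq> {..<n} \<Longrightarrow> pt S \<in> cube n"
  by (auto simp: pt_def cube_def)

lemma cube_eq: "cube n = pt ` Pow {..<n}"
proof
  show "cube n \<subseteq> pt ` Pow {..<n}"
  proof
    fix x assume x: "x \<in> cube n"
    have "x = pt {i. i < n \<and> x i = -1}"
    proof
      fix i show "x i = pt {i. i < n \<and> x i = -1} i"
        using x by (cases "i < n") (auto simp: cube_def pt_def)
    qed
    then show "x \<in> pt ` Pow {..<n}" by blast
  qed
  show "pt ` Pow {..<n} \<subseteq> cube n" using pt_cube by auto
qed

lemma finite_cube: "finite (cube n)" by (simp add: cube_eq)

lemma pt_tog: "pt (tog S i) = flip (pt S) i"
  by (auto simp: pt_def flip_def tog_def)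

lemma delta_prod:
  assumes "x \<in> cube n" "z \<in> cube n"
  shows "(\<Prod>i<n. (1 + z i * x i) / 2) = (if z = x then 1 else 0)"
proof (cases "z = x")
  case True
  have "(1 + z i * x i) / 2 = 1" if "i < n" for i
    using assms(1) that True by (auto simp: cube_def)
  then show ?thesis using True by simp
next
  case False
  then obtain i where i: "z i \<noteq> x i" by blast
  have "i < n"
  proof (rule ccontr)
    assume "\<not> i < n"
    then show False using i assms by (simp add: cube_def)
  qed
  have "x i = 1 \<or> x i = -1" "z i = 1 \<or> z i = -1" using assms \<open>i < n\<close> by (auto simp: cube_def)
  then have "z i * x i = -1" using i by auto
  then have "(\<Prod>i<n. (1 + z i * x i) / 2) = 0" using \<open>i < n\<close> by (intro prod_zero bexI[of _ i]) auto
  then show ?thesis using False by simp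
qed

lemma expand_prod:
  fixes z x :: "nat \<Rightarrow> real"
  shows   "(\<Prod>i<n. (1 + z i * x i) / 2) = (\<Sum>S\<in>Pow {..<n}. (1/2)^n * (\<Prod>i\<in>S. z i) * (\<Prod>i\<in>S. x i))"
proof -
  have "(\<Prod>i<n. (1 + z i * x i) / 2) = (\<Prod>i<n. z i * x i + 1) / 2 ^ n"
    by (simp add: prod_dividef add.commute)
  also have "(\<Prod>i<n. z i * x i + 1) = (\<Sum>S\<in>Pow {..<n}. (\<Prod>i\<in>S. z i) * (\<Prod>i\<in>S. x i))"
    by (simp add: prod_add prod.distrib)
  finally show ?thesis by (simp add: sum_divide_distrib field_simps)
qed

lemma rep_exists:
  assumes "boolean_fun n f"
  shows "\<exists>c :: nat set \<Rightarrow> real. (\<forall>S. n < card S \<longrightarrow> c S = 0) \<and>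
      (\<forall>x\<in>cube n. f x = (\<Sum>S\<in>Pow {..<n}. c S * (\<Prod>i\<in>S. x i)))"
proof -
  define c where "c S = (if S \<subseteq> {..<n} then (\<Sum>z\<in>cube n. f z * ((1/2)^n * (\<Prod>i\<in>S. z i))) else 0)" for S
  have "c S = 0" if "n < card S" for S
  proof -
    have "\<not> S \<subseteq> {..<n}" using that card_mono[of "{..<n}" S] by auto
    then show ?thesis by (simp add: c_def)
  qed
  moreover have "f x = (\<Sum>S\<in>Pow {..<n}. c S * (\<Prod>i\<in>S. x i))" if x: "x \<in> cube n" for x
  proof -
    have "f x = (\<Sum>z\<in>cube n. f z * (\<Prod>i<n. (1 + z i * x i) / 2))"
    proof -
      have "(\<Sum>z\<in>cube n. f z * (\<Prod>i<n. (1 + z i * x i) / 2)) = (\<Sum>z\<in>cube n. if x = z then f z else 0)"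
        by (intro sum.cong refl) (auto simp: delta_prod x)
      then show ?thesis using x finite_cube[of n] by simp
    qed
    also have "\<dots> = (\<Sum>z\<in>cube n. \<Sum>S\<in>Pow {..<n}. f z * ((1/2)^n * (\<Prod>i\<in>S. z i)) * (\<Prod>i\<in>S. x i))"
      by (simp add: expand_prod sum_distrib_left mult.assoc)
    also have "\<dots> = (\<Sum>S\<in>Pow {..<n}. \<Sum>z\<in>cube n. f z * ((1/2)^n * (\<Prod>i\<in>S. z i)) * (\<Prod>i\<in>S. x i))"
      by (rule sum.swap)
    also have "\<dots> = (\<Sum>S\<in>Pow {..<n}. c S * (\<Prod>i\<in>S. x i))"
      by (intro sum.cong refl) (simp add: c_def sum_distrib_right)
    finally show ?thesis .
  qed
  ultimately show ?thesis by blast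
qed

lemma comb:
  assumes "finite F"
  shows "(\<Sum>S\<in>Pow F. (-1::real) ^ card S * (-1) ^ card (T \<inter> S)) = (if F \<subseteq> T then 2 ^ card F else 0)"
  using assms
proof (induction F rule: finite_induct)
  case empty
  then show ?case by simp
next
  case (insert a F)
  define g where "g S = (-1::real) ^ card S * (-1) ^ card (T \<inter> S)" for S
  have disj: "Pow F \<inter> insert a ` Pow F = {}" using insert by auto
  have inj: "inj_on (insert a) (Pow F)" using insert by (intro inj_onI) (metis Diff_insert_absorb PowD subsetD)
  have gi: "g (insert a S) = (if a \<in> T then 1 else -1) * g S" if "S \<in> Pow F" for S
  proof -
    have aS: "a \<notin> S" "finite S" using that insert by (auto intro: finite_subset)
    have "T \<inter> insert a S = (if a \<in> T then insert a (T \<inter> S) else T \<inter> S)" by auto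
    then show ?thesis using aS by (simp add: g_def)
  qed
  have "(\<Sum>S\<in>Pow (insert a F). g S) = (\<Sum>S\<in>Pow F. g S) + (\<Sum>S\<in>insert a ` Pow F. g S)"
    unfolding Pow_insert using insert disj by (intro sum.union_disjoint) auto
  also have "(\<Sum>S\<in>insert a ` Pow F. g S) = (\<Sum>S\<in>Pow F. g (insert a S))"
    using inj by (simp add: sum.reindex)
  also have "\<dots> = (if a \<in> T then 1 else -1) * (\<Sum>S\<in>Pow F. g S)"
    by (simp add: gi sum_distrib_left)
  finally show ?case using insert.IH insert.hyps by (simp add: g_def)
qed



lemma neg1_pow: "(-1::real) ^ k = 1 \<or> (-1::real) ^ k = -1"
  by (cases "even k") auto

theorem corollary1p3:
  fixes n :: nat and f :: "(nat \<Rightarrow> real) \<Rightarrow> real"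
  assumes "n \<ge> 1" and "boolean_fun n f"
  shows "real (sensitivity n f) \<ge> sqrt (real (mdeg n f))"
proof -
  define P where "P d = (\<exists>c :: nat set \<Rightarrow> real. (\<forall>S. d < card S \<longrightarrow> c S = 0) \<and>
      (\<forall>x\<in>cube n. f x = (\<Sum>S\<in>Pow {..<n}. c S * (\<Prod>i\<in>S. x i))))" for d
  define D where "D = mdeg n f"
  have Dl: "D = (LEAST d. P d)" by (simp add: D_def mdeg_def P_def)
  have "P (LEAST d. P d)" by (rule LeastI_ex) (use rep_exists[OF assms(2)] in \<open>auto simp: P_def\<close>)
  then have PD: "P D" using Dl by simp
  have fb: "f x = 1 \<or> f x = -1" if "x \<in> cube n" for x using assms(2) that by (simp add: boolean_fun_def)
  show ?thesis
  proof (cases "D = 0")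
    case True then show ?thesis by (simp add: D_def[symmetric])
  next
    case False
    obtain c where c0: "\<forall>S. D < card S \<longrightarrow> c S = 0"
      and crep: "\<forall>x\<in>cube n. f x = (\<Sum>S\<in>Pow {..<n}. c S * (\<Prod>i\<in>S. x i))"
      using PD by (auto simp: P_def)
    have "\<exists>S0. S0 \<subseteq> {..<n} \<and> card S0 = D \<and> c S0 \<noteq> 0"
    proof (rule ccontr)
      assume nex: "\<not> (\<exists>S0. S0 \<subseteq> {..<n} \<and> card S0 = D \<and> c S0 \<noteq> 0)"
      define c' where "c' S = (if card S < D then c S else 0)" for S
      have "P (D - 1)" unfolding P_def
      proof (intro exI[of _ c'] conjI ballI allI impI)
        fix S :: "nat set" assume "D - 1 < card S" then show "c' S = 0" by (auto simp: c'_def)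
      next
        fix x assume x: "x \<in> cube n"
        have "(\<Sum>S\<in>Pow {..<n}. c' S * (\<Prod>i\<in>S. x i)) = (\<Sum>S\<in>Pow {..<n}. c S * (\<Prod>i\<in>S. x i))"
        proof (intro sum.cong refl)
          fix S assume S: "S \<in> Pow {..<n}"
          have "c' S = c S"
          proof (cases "card S < D")
            case True then show ?thesis by (simp add: c'_def)
          next
            case False2: False
            then have "card S = D \<or> D < card S" by linarith
            then have "c S = 0" using c0 nex S by auto
            then show ?thesis using False2 by (simp add: c'_def)
          qed
          then show "c' S * (\<Prod>i\<in>S. x i) = c S * (\<Prod>i\<in>S. x i)" by simp
        qed
        then show "f x = (\<Sum>S\<in>Pow {..<n}. c' S * (\<Prod>i\<in>S. x i))" using crep x by simp
      qed
      moreover have "D - 1 < (LEAST d. P d)" using False Dl by simp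
      ultimately show False using not_less_Least by blast
    qed
    then obtain S0 where S0: "S0 \<subseteq> {..<n}" "card S0 = D" "c S0 \<noteq> 0" by blast
    have fS0: "finite S0" using S0(1) finite_subset by blast
    define G where "G S = (-1::real) ^ card S * f (pt S)" for S
    have ptc: "pt S \<in> cube n" if "S \<in> Pow S0" for S using pt_cube S0(1) that by auto
    have Gpm: "G S = 1 \<or> G S = -1" if "S \<in> Pow S0" for S
      using fb[OF ptc[OF that]] neg1_pow[of "card S"] unfolding G_def by auto
    have sumG: "(\<Sum>S\<in>Pow S0. G S) = c S0 * 2 ^ D"
    proof -
      have "(\<Sum>S\<in>Pow S0. G S) = (\<Sum>S\<in>Pow S0. \<Sum>T\<in>Pow {..<n}. (-1) ^ card S * (c T * (\<Prod>i\<in>T. pt S i)))"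
        by (intro sum.cong refl) (simp add: G_def crep ptc sum_distrib_left)
      also have "\<dots> = (\<Sum>T\<in>Pow {..<n}. c T * (\<Sum>S\<in>Pow S0. (-1) ^ card S * (\<Prod>i\<in>T. pt S i)))"
        by (subst sum.swap) (simp add: sum_distrib_left mult_ac)
      also have "\<dots> = (\<Sum>T\<in>Pow {..<n}. c T * (if S0 \<subseteq> T then 2 ^ D else 0))"
      proof (intro sum.cong refl)
        fix T assume T: "T \<in> Pow {..<n}"
        have fT: "finite T" using T finite_subset by auto
        have "(\<Prod>i\<in>T. pt S i) = (-1) ^ card (T \<inter> S)" for S
        proof -
          have "(\<Prod>i\<in>T. pt S i) = (\<Prod>i\<in>T \<inter> {i. i \<in> S}. -1) * (\<Prod>i\<in>T \<inter> - {i. i \<in> S}. 1)"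
            unfolding pt_def using fT by (rule prod.If_cases)
          then show ?thesis by simp
        qed
        then show "c T * (\<Sum>S\<in>Pow S0. (-1) ^ card S * (\<Prod>i\<in>T. pt S i)) = c T * (if S0 \<subseteq> T then 2 ^ D else 0)"
          using comb[OF fS0, of T] S0 by simp
      qed
      also have "\<dots> = (\<Sum>T\<in>Pow {..<n}. if T = S0 then c S0 * 2 ^ D else 0)"
      proof (intro sum.cong refl)
        fix T assume T: "T \<in> Pow {..<n}"
        show "c T * (if S0 \<subseteq> T then 2 ^ D else 0) = (if T = S0 then c S0 * 2 ^ D else 0)"
        proof (cases "S0 \<subseteq> T \<and> T \<noteq> S0")
          case True
          have "finite T" using T finite_subset by auto
          then have "card S0 < card T" using True by (intro psubset_card_mono) auto
          then have "c T = 0" using c0 S0 by simp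
          then show ?thesis using True by simp
        next
          case False then show ?thesis by auto
        qed
      qed
      also have "\<dots> = c S0 * 2 ^ D" using S0 by simp
      finally show ?thesis .
    qed
    define H1 where "H1 = {S\<in>Pow S0. G S = 1}"
    have cP: "card (Pow S0) = 2 ^ D" using fS0 S0 by (simp add: card_Pow)
    have "(\<Sum>S\<in>Pow S0. G S) = 2 * real (card H1) - 2 ^ D"
    proof -
      have "(\<Sum>S\<in>Pow S0. G S) = (\<Sum>S\<in>Pow S0. 2 * (if G S = 1 then 1 else 0) - 1)"
        by (intro sum.cong refl) (use Gpm in auto)
      also have "\<dots> = 2 * (\<Sum>S\<in>Pow S0. if G S = 1 then 1 else 0) - real (card (Pow S0))"
        by (simp add: sum_subtractf sum_distrib_left)
      also have "(\<Sum>S\<in>Pow S0. if G S = 1 then 1 else (0::real)) = real (card H1)"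
        unfolding H1_def using fS0 by (simp add: sum.inter_filter[symmetric])
      finally show ?thesis using cP by simp
    qed
    then have "2 * real (card H1) \<noteq> 2 ^ D" using sumG S0 by auto
    then have neq: "2 * card H1 \<noteq> 2 ^ D"
      by (metis of_nat_mult of_nat_numeral of_nat_power)
    obtain s where Hbig: "2 * card {S\<in>Pow S0. G S = s} > 2 ^ D"
    proof (cases "2 * card H1 > 2 ^ D")
      case True then show ?thesis using that[of 1] by (simp add: H1_def)
    next
      case False
      have "{S\<in>Pow S0. G S = -1} = Pow S0 - H1" using Gpm by (auto simp: H1_def)
      moreover have "H1 \<subseteq> Pow S0" by (auto simp: H1_def)
      ultimately have "card {S\<in>Pow S0. G S = -1} = 2 ^ D - card H1" using cP fS0
        by (simp add: card_Diff_subset finite_subset)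
      then show ?thesis using that[of "-1"] False neq by linarith
    qed
    define H where "H = {S\<in>Pow S0. G S = s}"
    have "\<exists>S\<in>H. sqrt (real (card S0)) \<le> real (card {i\<in>S0. tog S i \<in> H})"
      by (rule huang) (use fS0 False S0 Hbig in \<open>auto simp: H_def\<close>)
    then obtain S where SH: "S \<in> H" and sq: "sqrt (real (card S0)) \<le> real (card {i\<in>S0. tog S i \<in> H})"
      by blast
    have SP: "S \<in> Pow S0" using SH by (simp add: H_def)
    have fS: "finite S" using SP fS0 finite_subset by auto
    define x0 where "x0 = pt S"
    have x0c: "x0 \<in> cube n" using ptc[OF SP] by (simp add: x0_def)
    have sub: "{i\<in>S0. tog S i \<in> H} \<subseteq> {i. i < n \<and> f x0 \<noteq> f (flip x0 i)}"
    proof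
      fix i assume i: "i \<in> {i\<in>S0. tog S i \<in> H}"
      have "G (tog S i) = G S" using i SH by (simp add: H_def)
      then have "- ((-1) ^ card S * f (flip x0 i)) = (-1) ^ card S * f x0"
        by (simp add: G_def pow_tog[OF fS] pt_tog x0_def)
      then have "f (flip x0 i) = - f x0" using neg1_pow[of "card S"] by auto
      moreover have "f x0 \<noteq> 0" using fb[OF x0c] by auto
      ultimately have "f x0 \<noteq> f (flip x0 i)" by auto
      moreover have "i < n" using i S0(1) by auto
      ultimately show "i \<in> {i. i < n \<and> f x0 \<noteq> f (flip x0 i)}" by simp
    qed
    have "card {i\<in>S0. tog S i \<in> H} \<le> sens_at n f x0"
      unfolding sens_at_def by (rule card_mono[OF _ sub]) (rule finite_subset[of _ "{..<n}"], auto)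
    moreover have "sens_at n f x0 \<le> sensitivity n f"
      unfolding sensitivity_def by (rule Max_ge) (use x0c finite_cube in auto)
    ultimately have "real (card {i\<in>S0. tog S i \<in> H}) \<le> real (sensitivity n f)" by simp
    then show ?thesis using sq S0(2) by (simp add: D_def)
  qed
qed


end
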